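(* Let $P$ be a finite graded poset with $\hat0$ and let $\lambda$ be an ER-labeling of $P$ satisfying the rank two switching property, the braid relation and the cancellative property. Then the edge labeling $\lambda^*$ of $Q_\lambda(P)$ defined by $\lambda^*(X\lessdot Y)=S(Y)\setminus S(X)$ is an ER$^*$-labeling, i.e., every closed interval of $Q_\lambda(P)$ has exactly one ascent-free maximal chain.
   Context: An E-labeling is a map $\lambda$ from the cover relations of $P$ to a poset $\Lambda$. The word of labels of a saturated chain $x_0\lessdot\cdots\lessdot x_\ell$ is $\lambda(x_0\lessdot x_1)\cdots\lambda(x_{\ell-1}\lessdot x_\ell)$; the chain is increasing if the word is strictly increasing, ascent-free if no $i$ has $\lambda(x_{i-1}\lessdot x_i)<\lambda(x_i\lessdot x_{i+1})$. ER-labeling: every closed interval has exactly one increasing maximal chain. Rank two switching property: for every saturated chain $\hat0=x_0\lessdot\cdots\lessdot x_k$ and every $i$ with $\lambda(x_{i-1}\lessdot x_i)<\lambda(x_i\lessdot x_{i+1})$ there is a unique $x_i'$ with $x_{i-1}\lessdot x_i'\lessdot x_{i+1}$, $\lambda(x_{i-1}\lessdot x_i')=\lambda(x_i\lessdot x_{i+1})$, $\lambda(x_i'\lessdot x_{i+1})=\lambda(x_{i-1}\lessdot x_i)$. Quadratic exchange: for a maximal chain $\mathbf c$ of an interval with an ascent at position $i$, $U_i(\mathbf c)$ replaces $x_i$ by $x_i'$; otherwise $U_i(\mathbf c)=\mathbf c$. For maximal chains $\mathbf c_1,\mathbf c_2$ of an interval $[x,y]$ write $\mathbf c_1\sim_\lambda\mathbf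 c_2$ if they are connected by a sequence of quadratic exchanges (applied forwards or backwards) within $[x,y]$. Braid relation: for every maximal chain $\mathbf c$ of any interval with three strictly increasing consecutive labels at positions $i,i+1,i+2$, $U_iU_{i+1}U_i(\mathbf c)=U_{i+1}U_iU_{i+1}(\mathbf c)$. Cancellative property: for all $z<x<y$ in $P$, every maximal chain $\mathbf c$ of $[z,x]$ and maximal chains $\mathbf c_1,\mathbf c_2$ of $[x,y]$, $\mathbf c\cup\mathbf c_1\sim_\lambda\mathbf c\cup\mathbf c_2$ (in $[z,y]$) implies $\mathbf c_1\sim_\lambda\mathbf c_2$ (in $[x,y]$). $Q_\lambda(P)$: $C(P)$ is the set of saturated chains of $P$ starting at $\hat0$ ordered by inclusion; $e(\mathbf c)$ is the top element of $\mathbf c$. For $\mathbf c_1,\mathbf c_2\in C(P)$, $\mathbf c_1\sim\mathbf c_2$ iff $e(\mathbf c_1)=e(\mathbf c_2)=y$ and $\mathbf c_1\sim_\lambda\mathbf c_2$ in $[\hat0,y]$. $Q_\lambda(P)$ is the set of classes ordered by the transitive closure of: $X\le Y$ if some $\mathbf c\in X$, $\mathbf d\in Y$ satisfy $\mathbf c\subseteq\mathbf d$. All chains in a class $X$ have the same multiset $S(X)$ of labels (the multiset of labels of its cover relations), and if $X\lessdot Y$ then $S(Y)\setminus S(X)$ (multiset difference) consists of a single label. *)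

theory Defs
  imports Main "HOL-Library.Multiset"
begin

definition is_poset :: "'a set \<Rightarrow> ('a \<Rightarrow> 'a \<Rightarrow> bool) \<Rightarrow> bool" where
  "is_poset A le \<longleftrightarrow>
     (\<forall>x\<in>A. le x x) \<and>
     (\<forall>x\<in>A. \<forall>y\<in>A. le x y \<and> le y x \<longrightarrow> x = y) \<and>
     (\<forall>x\<in>A. \<forall>y\<in>A. \<forall>z\<in>A. le x y \<and> le y z \<longrightarrow> le x z)"

definition pcover :: "'a set \<Rightarrow> ('a \<Rightarrow> 'a \<Rightarrow> bool) \<Rightarrow> 'a \<Rightarrow> 'a \<Rightarrow> bool" where
  "pcover A le x y \<longleftrightarrow> x \<in> A \<and> y \<in> A \<and> le x y \<and> x \<noteq> y \<and>
     \<not> (\<exists>z\<in>A. le x z \<and> le z y \<and> z \<noteq> x \<and> z \<noteq> y)"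

definition graded_with_bot :: "'a set \<Rightarrow> ('a \<Rightarrow> 'a \<Rightarrow> bool) \<Rightarrow> 'a \<Rightarrow> bool" where
  "graded_with_bot A le z \<longleftrightarrow> z \<in> A \<and> (\<forall>x\<in>A. le z x) \<and>
     (\<exists>\<rho> :: 'a \<Rightarrow> nat. \<rho> z = 0 \<and> (\<forall>x y. pcover A le x y \<longrightarrow> \<rho> y = Suc (\<rho> x)))"

definition sat_chain :: "'a set \<Rightarrow> ('a \<Rightarrow> 'a \<Rightarrow> bool) \<Rightarrow> 'a list \<Rightarrow> bool" where
  "sat_chain A le c \<longleftrightarrow> c \<noteq> [] \<and> set c \<subseteq> A \<and>
     (\<forall>i. Suc i < length c \<longrightarrow> pcover A le (c ! i) (c ! Suc i))"

text \<open>Maximal chains of the closed interval [x,y] (in a finite poset = saturated chains from x to y).\<close>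
definition maxchain :: "'a set \<Rightarrow> ('a \<Rightarrow> 'a \<Rightarrow> bool) \<Rightarrow> 'a \<Rightarrow> 'a \<Rightarrow> 'a list \<Rightarrow> bool" where
  "maxchain A le x y c \<longleftrightarrow> sat_chain A le c \<and> hd c = x \<and> last c = y"

definition label_word :: "('a \<Rightarrow> 'a \<Rightarrow> 'l) \<Rightarrow> 'a list \<Rightarrow> 'l list" where
  "label_word lab c = map (\<lambda>(a, b). lab a b) (zip c (tl c))"

definition increasing :: "'l::order list \<Rightarrow> bool" where
  "increasing w \<longleftrightarrow> (\<forall>i. Suc i < length w \<longrightarrow> w ! i < w ! Suc i)"

definition ascent_free :: "'l::order list \<Rightarrow> bool" where
  "ascent_free w \<longleftrightarrow> (\<forall>i. Suc i < length w \<longrightarrow> \<not> (w ! i < w ! Suc i))"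

definition ER_labeling :: "'a set \<Rightarrow> ('a \<Rightarrow> 'a \<Rightarrow> bool) \<Rightarrow> ('a \<Rightarrow> 'a \<Rightarrow> 'l::order) \<Rightarrow> bool" where
  "ER_labeling A le lab \<longleftrightarrow> (\<forall>x\<in>A. \<forall>y\<in>A. le x y \<longrightarrow>
     (\<exists>!c. maxchain A le x y c \<and> increasing (label_word lab c)))"

definition ERstar_labeling :: "'a set \<Rightarrow> ('a \<Rightarrow> 'a \<Rightarrow> bool) \<Rightarrow> ('a \<Rightarrow> 'a \<Rightarrow> 'l::order) \<Rightarrow> bool" where
  "ERstar_labeling A le lab \<longleftrightarrow> (\<forall>x\<in>A. \<forall>y\<in>A. le x y \<longrightarrow>
     (\<exists>!c. maxchain A le x y c \<and> ascent_free (label_word lab c)))"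

text \<open>Rank two switching property (list index i is the element x_i; ascent at position i).\<close>
definition rank_two_switching :: "'a set \<Rightarrow> ('a \<Rightarrow> 'a \<Rightarrow> bool) \<Rightarrow> 'a \<Rightarrow> ('a \<Rightarrow> 'a \<Rightarrow> 'l::order) \<Rightarrow> bool" where
  "rank_two_switching A le z lab \<longleftrightarrow> (\<forall>c i. sat_chain A le c \<and> hd c = z \<and> 0 < i \<and> Suc i < length c \<and>
      lab (c ! (i - 1)) (c ! i) < lab (c ! i) (c ! Suc i) \<longrightarrow>
      (\<exists>!x'. pcover A le (c ! (i - 1)) x' \<and> pcover A le x' (c ! Suc i) \<and>
             lab (c ! (i - 1)) x' = lab (c ! i) (c ! Suc i) \<and>
             lab x' (c ! Suc i) = lab (c ! (i - 1)) (c ! i)))"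

definition switch_elem :: "'a set \<Rightarrow> ('a \<Rightarrow> 'a \<Rightarrow> bool) \<Rightarrow> ('a \<Rightarrow> 'a \<Rightarrow> 'l) \<Rightarrow> 'a \<Rightarrow> 'a \<Rightarrow> 'a \<Rightarrow> 'a" where
  "switch_elem A le lab a b d = (THE x'. pcover A le a x' \<and> pcover A le x' d \<and>
      lab a x' = lab b d \<and> lab x' d = lab a b)"

definition qexch :: "'a set \<Rightarrow> ('a \<Rightarrow> 'a \<Rightarrow> bool) \<Rightarrow> ('a \<Rightarrow> 'a \<Rightarrow> 'l::order) \<Rightarrow> nat \<Rightarrow> 'a list \<Rightarrow> 'a list" where
  "qexch A le lab i c =
     (if 0 < i \<and> Suc i < length c \<and> lab (c ! (i - 1)) (c ! i) < lab (c ! i) (c ! Suc i)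
      then c[i := switch_elem A le lab (c ! (i - 1)) (c ! i) (c ! Suc i)] else c)"

definition qstep :: "'a set \<Rightarrow> ('a \<Rightarrow> 'a \<Rightarrow> bool) \<Rightarrow> ('a \<Rightarrow> 'a \<Rightarrow> 'l::order) \<Rightarrow> 'a \<Rightarrow> 'a \<Rightarrow> 'a list \<Rightarrow> 'a list \<Rightarrow> bool" where
  "qstep A le lab x y c d \<longleftrightarrow> maxchain A le x y c \<and> maxchain A le x y d \<and>
     (\<exists>i. qexch A le lab i c = d \<or> qexch A le lab i d = c)"

definition lequiv :: "'a set \<Rightarrow> ('a \<Rightarrow> 'a \<Rightarrow> bool) \<Rightarrow> ('a \<Rightarrow> 'a \<Rightarrow> 'l::order) \<Rightarrow> 'a \<Rightarrow> 'a \<Rightarrow> 'a list \<Rightarrow> 'a list \<Rightarrow> bool" where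
  "lequiv A le lab x y c d \<longleftrightarrow> maxchain A le x y c \<and> maxchain A le x y d \<and>
     (qstep A le lab x y)\<^sup>*\<^sup>* c d"

definition braid_relation :: "'a set \<Rightarrow> ('a \<Rightarrow> 'a \<Rightarrow> bool) \<Rightarrow> ('a \<Rightarrow> 'a \<Rightarrow> 'l::order) \<Rightarrow> bool" where
  "braid_relation A le lab \<longleftrightarrow> (\<forall>x y c i. maxchain A le x y c \<and> 0 < i \<and> i + 2 < length c \<and>
      label_word lab c ! (i - 1) < label_word lab c ! i \<and>
      label_word lab c ! i < label_word lab c ! (i + 1) \<longrightarrow>
      qexch A le lab i (qexch A le lab (Suc i) (qexch A le lab i c)) =
      qexch A le lab (Suc i) (qexch A le lab i (qexch A le lab (Suc i) c)))"

definition cancellative :: "'a set \<Rightarrow> ('a \<Rightarrow> 'a \<Rightarrow> bool) \<Rightarrow> ('a \<Rightarrow> 'a \<Rightarrow> 'l::order) \<Rightarrow> bool" where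
  "cancellative A le lab \<longleftrightarrow> (\<forall>z x y c c1 c2. z \<in> A \<and> x \<in> A \<and> y \<in> A \<and>
      le z x \<and> z \<noteq> x \<and> le x y \<and> x \<noteq> y \<and>
      maxchain A le z x c \<and> maxchain A le x y c1 \<and> maxchain A le x y c2 \<and>
      lequiv A le lab z y (c @ tl c1) (c @ tl c2) \<longrightarrow> lequiv A le lab x y c1 c2)"

definition chains_from :: "'a set \<Rightarrow> ('a \<Rightarrow> 'a \<Rightarrow> bool) \<Rightarrow> 'a \<Rightarrow> 'a list set" where
  "chains_from A le z = {c. sat_chain A le c \<and> hd c = z}"

definition chain_class :: "'a set \<Rightarrow> ('a \<Rightarrow> 'a \<Rightarrow> bool) \<Rightarrow> ('a \<Rightarrow> 'a \<Rightarrow> 'l::order) \<Rightarrow> 'a \<Rightarrow> 'a list \<Rightarrow> 'a list set" where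
  "chain_class A le lab z c = {d \<in> chains_from A le z. last d = last c \<and> lequiv A le lab z (last c) c d}"

definition Q_carrier :: "'a set \<Rightarrow> ('a \<Rightarrow> 'a \<Rightarrow> bool) \<Rightarrow> ('a \<Rightarrow> 'a \<Rightarrow> 'l::order) \<Rightarrow> 'a \<Rightarrow> 'a list set set" where
  "Q_carrier A le lab z = chain_class A le lab z ` chains_from A le z"

definition Q_le :: "'a set \<Rightarrow> ('a \<Rightarrow> 'a \<Rightarrow> bool) \<Rightarrow> ('a \<Rightarrow> 'a \<Rightarrow> 'l::order) \<Rightarrow> 'a \<Rightarrow> 'a list set \<Rightarrow> 'a list set \<Rightarrow> bool" where
  "Q_le A le lab z = (\<lambda>X Y. X \<in> Q_carrier A le lab z \<and> Y \<in> Q_carrier A le lab z \<and>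
      (\<exists>c\<in>X. \<exists>d\<in>Y. set c \<subseteq> set d))\<^sup>+\<^sup>+"

text \<open>S(X): the multiset of labels of (any) chain in the class X.\<close>
definition label_ms :: "('a \<Rightarrow> 'a \<Rightarrow> 'l) \<Rightarrow> 'a list set \<Rightarrow> 'l multiset" where
  "label_ms lab X = mset (label_word lab (SOME c. c \<in> X))"

definition lstar :: "('a \<Rightarrow> 'a \<Rightarrow> 'l) \<Rightarrow> 'a list set \<Rightarrow> 'a list set \<Rightarrow> 'l" where
  "lstar lab X Y = (THE l. label_ms lab Y - label_ms lab X = {#l#})"

end

theory Submission
  imports Defs
begin

fun scc :: "'a set \<Rightarrow> ('a \<Rightarrow> 'a \<Rightarrow> bool) \<Rightarrow> 'a list \<Rightarrow> bool" where
  "scc A r [] = False"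
| "scc A r [a] = (a \<in> A)"
| "scc A r (a # b # l) = (pcover A r a b \<and> scc A r (b # l))"

lemma sat_chain_scc: "sat_chain A r c = scc A r c"
proof (induction A r c rule: scc.induct)
  case (1 A r)
  then show ?case by (simp add: sat_chain_def)
next
  case (2 A r a)
  then show ?case by (simp add: sat_chain_def)
next
  case (3 A r a b l)
  have "(\<forall>i. Suc i < length (a # b # l) \<longrightarrow> pcover A r ((a # b # l) ! i) ((a # b # l) ! Suc i))
     \<longleftrightarrow> pcover A r a b \<and> (\<forall>i. Suc i < length (b # l) \<longrightarrow> pcover A r ((b # l) ! i) ((b # l) ! Suc i))"
    (is "?L \<longleftrightarrow> ?R")
  proof
    assume ?L
    have "pcover A r a b" using \<open>?L\<close>[rule_format, of 0] by simp
    moreover have "\<forall>i. Suc i < length (b # l) \<longrightarrow> pcover A r ((b # l) ! i) ((b # l) ! Suc i)"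
      using \<open>?L\<close> by (metis Suc_less_eq length_Cons nth_Cons_Suc)
    ultimately show ?R by blast
  next
    assume ?R
    show ?L
    proof (intro allI impI)
      fix i assume "Suc i < length (a # b # l)"
      with \<open>?R\<close> show "pcover A r ((a # b # l) ! i) ((a # b # l) ! Suc i)"
        by (cases i) auto
    qed
  qed
  moreover have "pcover A r a b \<Longrightarrow> a \<in> A" by (simp add: pcover_def)
  ultimately show ?case using 3 by (auto simp: sat_chain_def)
qed

lemma scc_ne: "scc A r c \<Longrightarrow> c \<noteq> []" by (cases c) auto

lemma scc_hd: "scc A r c \<Longrightarrow> hd c \<in> A"
  by (induction A r c rule: scc.induct) (auto simp: pcover_def)

lemma scc_set: "scc A r c \<Longrightarrow> set c \<subseteq> A"
  by (induction A r c rule: scc.induct) (auto simp: pcover_def)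

lemma scc_Cons: "scc A r (a # l) \<longleftrightarrow> (if l = [] then a \<in> A else pcover A r a (hd l) \<and> scc A r l)"
  by (cases l) auto

lemma scc_append:
  "u \<noteq> [] \<Longrightarrow> v \<noteq> [] \<Longrightarrow> scc A r (u @ v) \<longleftrightarrow> scc A r u \<and> scc A r v \<and> pcover A r (last u) (hd v)"
proof (induction u)
  case Nil then show ?case by simp
next
  case (Cons a u)
  show ?case
  proof (cases "u = []")
    case True
    then show ?thesis using Cons by (auto simp: scc_Cons pcover_def)
  next
    case False
    then show ?thesis using Cons by (auto simp: scc_Cons)
  qed
qed

lemma scc_prefix: "scc A r (u @ v) \<Longrightarrow> u \<noteq> [] \<Longrightarrow> scc A r u"
  by (cases "v = []") (auto simp: scc_append)

lemma scc_suffix: "scc A r (u @ v) \<Longrightarrow> v \<noteq> [] \<Longrightarrow> scc A r v"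
  by (cases "u = []") (auto simp: scc_append)

lemma scc_replace:
  assumes "scc A r (p @ u @ s)" "u \<noteq> []" "scc A r u'" "hd u' = hd u" "last u' = last u"
  shows "scc A r (p @ u' @ s)"
proof -
  have u'ne: "u' \<noteq> []" using assms(3) scc_ne by blast
  have 1: "scc A r (u' @ s)"
  proof (cases "s = []")
    case True then show ?thesis using assms by simp
  next
    case False
    have "scc A r (u @ s)" using assms(1,2) scc_suffix by blast
    then show ?thesis using False assms u'ne by (simp add: scc_append)
  qed
  show ?thesis
  proof (cases "p = []")
    case True then show ?thesis using 1 by simp
  next
    case False
    have "scc A r (p @ (u @ s))" using assms by simp
    then show ?thesis using False assms u'ne 1 by (simp add: scc_append hd_append)
  qed
qed


lemma lw_Nil[simp]: "label_word lab [] = []" by (simp add: label_word_def)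
lemma lw_single[simp]: "label_word lab [a] = []" by (simp add: label_word_def)
lemma lw_Cons2[simp]: "label_word lab (a # b # l) = lab a b # label_word lab (b # l)"
  by (simp add: label_word_def)

lemma lw_length[simp]: "length (label_word lab u) = length u - 1"
  by (simp add: label_word_def)

lemma lw_nth: "k < length u - 1 \<Longrightarrow> label_word lab u ! k = lab (u ! k) (u ! Suc k)"
  by (simp add: label_word_def nth_tl)

lemma lw_append1: "c \<noteq> [] \<Longrightarrow> label_word lab (c @ [a]) = label_word lab c @ [lab (last c) a]"
proof (induction c rule: induct_list012)
  case (3 x y zs)
  then show ?case by simp
qed auto

lemma lw_Cons: "label_word lab (a # l) = (if l = [] then [] else lab a (hd l) # label_word lab l)"
  by (cases l) auto

definition ascent_at :: "('a \<Rightarrow> 'a \<Rightarrow> 'l::order) \<Rightarrow> 'a list \<Rightarrow> nat \<Rightarrow> bool" where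
  "ascent_at lab u i \<longleftrightarrow> 0 < i \<and> Suc i < length u \<and> lab (u ! (i - 1)) (u ! i) < lab (u ! i) (u ! Suc i)"

lemma qexch_eq: "qexch A r lab i u = (if ascent_at lab u i then u[i := switch_elem A r lab (u ! (i - 1)) (u ! i) (u ! Suc i)] else u)"
  by (simp add: qexch_def ascent_at_def)

lemma ascent_at_lift:
  assumes "ascent_at lab u i"
  shows "ascent_at lab (p @ u @ s) (i + length p)"
    and "(p @ u @ s) ! (i + length p - 1) = u ! (i - 1)"
    and "(p @ u @ s) ! (i + length p) = u ! i"
    and "(p @ u @ s) ! Suc (i + length p) = u ! Suc i"
proof -
  have i: "0 < i" "Suc i < length u" using assms by (auto simp: ascent_at_def)
  have e: "i + length p - 1 = length p + (i - 1)" using i by simp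
  show 1: "(p @ u @ s) ! (i + length p - 1) = u ! (i - 1)"
  proof -
    have "i - 1 < length u" using i by simp
    then have "(u @ s) ! (i - 1) = u ! (i - 1)" by (simp add: nth_append)
    then show ?thesis unfolding e nth_append_length_plus by simp
  qed
  show 2: "(p @ u @ s) ! (i + length p) = u ! i"
    using i nth_append_length_plus[of p "u @ s" i] by (simp add: nth_append add.commute)
  show 3: "(p @ u @ s) ! Suc (i + length p) = u ! Suc i"
    using i nth_append_length_plus[of p "u @ s" "Suc i"] by (simp add: nth_append add.commute)
  show "ascent_at lab (p @ u @ s) (i + length p)"
    using assms i 1 2 3 unfolding ascent_at_def by auto
qed

lemma qexch_lift:
  assumes "ascent_at lab u i"
  shows "qexch A r lab (i + length p) (p @ u @ s) = p @ qexch A r lab i u @ s"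
proof -
  have i: "0 < i" "Suc i < length u" using assms by (auto simp: ascent_at_def)
  show ?thesis using ascent_at_lift[OF assms, of p s] assms i
    by (simp add: qexch_eq list_update_append)
qed

lemma label_word_update:
  assumes "0 < i" "Suc i < length u"
  shows "label_word lab (u[i := s]) = (label_word lab u)[i - 1 := lab (u ! (i - 1)) s, i := lab s (u ! Suc i)]"
  using assms by (intro nth_equalityI) (auto simp: lw_nth nth_list_update)


locale ctx =
  fixes P :: "'a set" and le :: "'a \<Rightarrow> 'a \<Rightarrow> bool" and z :: 'a
    and lab :: "'a \<Rightarrow> 'a \<Rightarrow> 'l::order" and rk :: "'a \<Rightarrow> nat"
  assumes fin: "finite P" and pos: "is_poset P le" and zP: "z \<in> P"
    and zle: "\<And>x. x \<in> P \<Longrightarrow> le z x"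
    and rk0: "rk z = 0" and rkc: "\<And>x y. pcover P le x y \<Longrightarrow> rk y = Suc (rk x)"
    and swp: "rank_two_switching P le z lab"
    and brd: "braid_relation P le lab"
    and canc: "cancellative P le lab"
begin

abbreviation "sc \<equiv> scc P le"
abbreviation "L \<equiv> label_word lab"
abbreviation "U \<equiv> qexch P le lab"
abbreviation "asc \<equiv> ascent_at lab"

definition reach :: "'a \<Rightarrow> bool" where
  "reach x \<longleftrightarrow> (\<exists>c. sc c \<and> hd c = z \<and> last c = x)"

lemma rk_nth: "sc u \<Longrightarrow> j < length u \<Longrightarrow> rk (u ! j) = rk (hd u) + j"
proof (induction u arbitrary: j rule: induct_list012)
  case (3 x y zs)
  then have c: "pcover P le x y" "sc (y # zs)" by auto
  show ?case
  proof (cases j)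
    case 0 then show ?thesis by simp
  next
    case (Suc k)
    then show ?thesis using 3(2)[OF c(2), of k] 3(4) rkc[OF c(1)] by simp
  qed
qed auto

lemma rk_last: "sc u \<Longrightarrow> rk (last u) = rk (hd u) + (length u - 1)"
  using rk_nth[of u "length u - 1"] scc_ne[of P le u] by (simp add: last_conv_nth)

lemma le_trans': "a \<in> P \<Longrightarrow> b \<in> P \<Longrightarrow> c \<in> P \<Longrightarrow> le a b \<Longrightarrow> le b c \<Longrightarrow> le a c"
  using pos unfolding is_poset_def by blast

lemma le_refl': "a \<in> P \<Longrightarrow> le a a"
  using pos unfolding is_poset_def by blast

lemma le_hd_last: "sc u \<Longrightarrow> le (hd u) (last u)"
proof (induction u rule: induct_list012)
  case (2 x) then show ?case using le_refl' by simp
next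
  case (3 x y zs)
  then have c: "pcover P le x y" "sc (y # zs)" by auto
  then have "le y (last (y # zs))" using 3 by simp
  moreover have "last (y # zs) \<in> P" using scc_set[OF c(2)] by auto
  moreover have "x \<in> P" "y \<in> P" "le x y" using c(1) by (auto simp: pcover_def)
  ultimately have "le x (last (y # zs))" using le_trans' by blast
  then show ?case by simp
qed auto

lemma switch_props:
  assumes "sc u" "reach (hd u)" "asc u i"
  defines "s \<equiv> switch_elem P le lab (u ! (i - 1)) (u ! i) (u ! Suc i)"
  shows "pcover P le (u ! (i - 1)) s \<and> pcover P le s (u ! Suc i) \<and>
         lab (u ! (i - 1)) s = lab (u ! i) (u ! Suc i) \<and> lab s (u ! Suc i) = lab (u ! (i - 1)) (u ! i)"
proof -
  obtain c where c: "sc c" "hd c = z" "last c = hd u" using assms(2) reach_def by blast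
  have une: "u \<noteq> []" using assms(1) scc_ne by blast
  have cne: "c \<noteq> []" using c(1) scc_ne by blast
  define p where "p = butlast c"
  have w: "sc (p @ u @ [])"
  proof (cases "p = []")
    case True then show ?thesis using assms(1) by simp
  next
    case False
    have "c = p @ [hd u]" using cne c(3) p_def by (metis append_butlast_last_id)
    then have "sc p" "pcover P le (last p) (hd u)" using c(1) False by (auto simp: scc_append)
    then show ?thesis using assms(1) False une by (simp add: scc_append)
  qed
  have hw: "hd (p @ u @ []) = z"
  proof (cases "p = []")
    case True then show ?thesis using c cne p_def une by (cases c) auto
  next
    case False then show ?thesis using c(2) cne p_def by (cases c) auto
  qed
  note A = ascent_at_lift[OF assms(3), of p "[]"]
  let ?w = "p @ u @ []" and ?k = "i + length p"
  have "sat_chain P le ?w" using w sat_chain_scc by metis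
  moreover have "0 < ?k" "Suc ?k < length ?w" "lab (?w ! (?k - 1)) (?w ! ?k) < lab (?w ! ?k) (?w ! Suc ?k)"
    using A(1) unfolding ascent_at_def by auto
  ultimately have "\<exists>!x'. pcover P le (?w ! (?k - 1)) x' \<and> pcover P le x' (?w ! Suc ?k) \<and>
             lab (?w ! (?k - 1)) x' = lab (?w ! ?k) (?w ! Suc ?k) \<and>
             lab x' (?w ! Suc ?k) = lab (?w ! (?k - 1)) (?w ! ?k)"
  proof -
    note R = swp[unfolded rank_two_switching_def, rule_format, of ?w ?k]
    show ?thesis by (rule R) (use \<open>sat_chain P le ?w\<close> hw \<open>0 < ?k\<close> \<open>Suc ?k < length ?w\<close>
         \<open>lab (?w ! (?k - 1)) (?w ! ?k) < lab (?w ! ?k) (?w ! Suc ?k)\<close> in blast)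
  qed
  then have "\<exists>!x'. pcover P le (u ! (i - 1)) x' \<and> pcover P le x' (u ! Suc i) \<and>
             lab (u ! (i - 1)) x' = lab (u ! i) (u ! Suc i) \<and> lab x' (u ! Suc i) = lab (u ! (i - 1)) (u ! i)"
    using A(2-4) by simp
  from theI'[OF this] show ?thesis unfolding s_def switch_elem_def .
qed

lemma qexch_step:
  assumes "sc u" "reach (hd u)" "asc u i"
  shows "sc (U i u)" "hd (U i u) = hd u" "last (U i u) = last u" "length (U i u) = length u"
    "L (U i u) = (L u)[i - 1 := L u ! i, i := L u ! (i - 1)]"
    "U i u \<noteq> u"
proof -
  define s where "s = switch_elem P le lab (u ! (i - 1)) (u ! i) (u ! Suc i)"
  have S: "pcover P le (u ! (i - 1)) s" "pcover P le s (u ! Suc i)"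
     "lab (u ! (i - 1)) s = lab (u ! i) (u ! Suc i)" "lab s (u ! Suc i) = lab (u ! (i - 1)) (u ! i)"
    using switch_props[OF assms] unfolding s_def by auto
  have i: "0 < i" "Suc i < length u" and lt: "lab (u ! (i - 1)) (u ! i) < lab (u ! i) (u ! Suc i)"
    using assms(3) by (auto simp: ascent_at_def)
  have Ue: "U i u = u[i := s]" using assms(3) by (simp add: qexch_eq s_def)
  have su: "sat_chain P le u" using assms(1) sat_chain_scc by metis
  have "sat_chain P le (u[i := s])"
    unfolding sat_chain_def
  proof (intro conjI allI impI)
    show "u[i := s] \<noteq> []" using i by auto
    have "s \<in> P" using S(1) by (simp add: pcover_def)
    moreover have "set u \<subseteq> P" using su by (simp add: sat_chain_def)
    ultimately show "set (u[i := s]) \<subseteq> P" using set_update_subset_insert[of u i s] by blast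
    fix j assume j: "Suc j < length (u[i := s])"
    show "pcover P le (u[i := s] ! j) (u[i := s] ! Suc j)"
    proof (cases "j = i - 1 \<or> j = i")
      case True
      then show ?thesis
      proof
        assume jj: "j = i - 1"
        have "u[i := s] ! j = u ! (i - 1)" using jj i by simp
        moreover have "u[i := s] ! Suc j = s" using jj i by simp
        ultimately show ?thesis using S(1) by simp
      next
        assume jj: "j = i"
        have "u[i := s] ! j = s" using jj i by simp
        moreover have "u[i := s] ! Suc j = u ! Suc i" using jj i by simp
        ultimately show ?thesis using S(2) by simp
      qed
    next
      case False
      then have "j \<noteq> i" "Suc j \<noteq> i" using i by auto
      then show ?thesis using su j by (simp add: sat_chain_def nth_list_update)
    qed
  qed
  then show "sc (U i u)" using Ue sat_chain_scc by metis
  show "hd (U i u) = hd u" using i Ue by (cases u; cases i) auto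
  show "last (U i u) = last u"
  proof -
    have ne: "u[i := s] \<noteq> []" "u \<noteq> []" using i by auto
    have "last (u[i := s]) = u[i := s] ! (length u - 1)" using ne by (simp add: last_conv_nth)
    also have "\<dots> = u ! (length u - 1)" using i by (subst nth_list_update_neq) auto
    also have "\<dots> = last u" using ne by (simp add: last_conv_nth)
    finally show ?thesis using Ue by simp
  qed
  show "length (U i u) = length u" using Ue by simp
  show "L (U i u) = (L u)[i - 1 := L u ! i, i := L u ! (i - 1)]"
  proof -
    have a: "L u ! (i - 1) = lab (u ! (i - 1)) (u ! i)" using i lw_nth[of "i - 1" u lab] by simp
    have b: "L u ! i = lab (u ! i) (u ! Suc i)" using i lw_nth[of i u lab] by simp
    show ?thesis by (simp only: Ue label_word_update[OF i] S(3,4) a b)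
  qed
  show "U i u \<noteq> u"
  proof
    assume "U i u = u"
    then have "s = u ! i" using Ue i by (metis nth_list_update_eq Suc_lessD)
    then show False using S(3) lt by simp
  qed
qed

end


definition lexgt :: "'l::order list \<Rightarrow> 'l list \<Rightarrow> bool" where
  "lexgt a b \<longleftrightarrow> length a = length b \<and> (\<exists>k<length a. take k a = take k b \<and> b ! k < a ! k)"

lemma lexgt_irrefl: "\<not> lexgt a a"
  by (auto simp: lexgt_def)

lemma take_eq_nth: "take k a = take k b \<Longrightarrow> j < k \<Longrightarrow> a ! j = b ! j"
  by (metis nth_take)

lemma take_eq_less: "take k a = take k b \<Longrightarrow> j \<le> k \<Longrightarrow> take j a = take j b"
proof -
  assume "take k a = take k b" "j \<le> k"
  then have "take j (take k a) = take j (take k b)" by simp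
  then show ?thesis using \<open>j \<le> k\<close> by (simp add: min_absorb1)
qed

lemma lexgt_trans: assumes "lexgt a b" "lexgt b c" shows "lexgt a c"
proof -
  obtain k1 where k1: "k1 < length a" "take k1 a = take k1 b" "b ! k1 < a ! k1" and l1: "length a = length b"
    using assms(1) by (auto simp: lexgt_def)
  obtain k2 where k2: "k2 < length b" "take k2 b = take k2 c" "c ! k2 < b ! k2" and l2: "length b = length c"
    using assms(2) by (auto simp: lexgt_def)
  show ?thesis
  proof (cases k1 k2 rule: linorder_cases)
    case less
    have "take k1 b = take k1 c" using take_eq_less[OF k2(2)] less by simp
    then have "take k1 a = take k1 c" using k1(2) by simp
    moreover have "b ! k1 = c ! k1" using take_eq_nth[OF k2(2) less] .
    moreover have "c ! k1 < a ! k1" using k1(3) \<open>b ! k1 = c ! k1\<close> by simp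
    ultimately have "\<exists>k<length a. take k a = take k c \<and> c ! k < a ! k" using k1(1) by blast
    then show ?thesis using l1 l2 unfolding lexgt_def by simp
  next
    case equal
    have "take k1 a = take k1 c" using k1(2) k2(2) equal by simp
    moreover have "c ! k1 < a ! k1"
    proof -
      have "c ! k1 < b ! k1" using k2(3) equal by simp
      then show ?thesis using k1(3) by (rule order.strict_trans)
    qed
    ultimately have "\<exists>k<length a. take k a = take k c \<and> c ! k < a ! k" using k1(1) by blast
    then show ?thesis using l1 l2 unfolding lexgt_def by simp
  next
    case greater
    have "take k2 a = take k2 b" using take_eq_less[OF k1(2)] greater by simp
    then have "take k2 a = take k2 c" using k2(2) by simp
    moreover have "a ! k2 = b ! k2" using take_eq_nth[OF k1(2) greater] .
    moreover have "c ! k2 < a ! k2" using k2(3) \<open>a ! k2 = b ! k2\<close> by simp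
    moreover have "k2 < length a" using k2(1) l1 by simp
    ultimately have "\<exists>k<length a. take k a = take k c \<and> c ! k < a ! k" by blast
    then show ?thesis using l1 l2 unfolding lexgt_def by simp
  qed
qed

context ctx begin

lemma asc_L: "asc u k \<longleftrightarrow> 0 < k \<and> Suc k < length u \<and> L u ! (k - 1) < L u ! k"
proof -
  have "0 < k \<Longrightarrow> Suc k < length u \<Longrightarrow> L u ! (k - 1) = lab (u ! (k - 1)) (u ! k)"
    using lw_nth[of "k - 1" u lab] by simp
  moreover have "Suc k < length u \<Longrightarrow> L u ! k = lab (u ! k) (u ! Suc k)"
    using lw_nth[of k u lab] by simp
  ultimately show ?thesis unfolding ascent_at_def by auto
qed

end

locale intv = ctx +
  fixes x :: 'a and y :: 'a
  assumes rx: "reach x"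
begin

definition mc :: "'a list \<Rightarrow> bool" where
  "mc u \<longleftrightarrow> sc u \<and> hd u = x \<and> last u = y"

definition fs :: "'a list \<Rightarrow> 'a list \<Rightarrow> bool" where
  "fs u v \<longleftrightarrow> mc u \<and> (\<exists>i. asc u i \<and> v = U i u)"

lemma fs_props:
  assumes "mc u" "asc u i"
  shows "fs u (U i u)" "mc (U i u)" "L (U i u) = (L u)[i - 1 := L u ! i, i := L u ! (i - 1)]"
    "length (U i u) = length u"
proof -
  have a: "sc u" "reach (hd u)" using assms rx by (auto simp: mc_def)
  note Q = qexch_step[OF a assms(2)]
  show "fs u (U i u)" using assms by (auto simp: fs_def)
  show "mc (U i u)" using Q assms(1) by (auto simp: mc_def)
  show "L (U i u) = (L u)[i - 1 := L u ! i, i := L u ! (i - 1)]" using Q by simp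
  show "length (U i u) = length u" using Q by simp
qed

lemma fs_mc: assumes "fs u v" shows "mc u \<and> mc v"
proof -
  obtain i where i: "mc u" "asc u i" "v = U i u" using assms by (auto simp: fs_def)
  then show ?thesis using fs_props(2)[OF i(1,2)] by simp
qed

lemma fs_lexgt: assumes "fs u v" shows "lexgt (L v) (L u)"
proof -
  obtain i where i: "mc u" "asc u i" "v = U i u" using assms by (auto simp: fs_def)
  note F = fs_props[OF i(1,2)]
  have ii: "0 < i" "Suc i < length u" "L u ! (i - 1) < L u ! i" using i(2) asc_L by auto
  have "take (i - 1) (L v) = take (i - 1) (L u)" using F(3) i(3) by simp
  moreover have "L v ! (i - 1) = L u ! i" using F(3) i(3) ii by (simp add: nth_list_update)
  moreover have "length (L v) = length (L u)" using F(4) i(3) by simp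
  moreover have "i - 1 < length (L v)" using F(4) i(3) ii by simp
  ultimately have "\<exists>k<length (L v). take k (L v) = take k (L u) \<and> L u ! k < L v ! k"
    using ii(3) by (intro exI[of _ "i - 1"]) simp
  then show ?thesis using \<open>length (L v) = length (L u)\<close> unfolding lexgt_def by simp
qed

lemma mc_length: "mc u \<Longrightarrow> length u = rk y - rk x + 1"
  using rk_last[of u] scc_ne[of P le u] unfolding mc_def by auto

lemma finite_mc: "finite {u. mc u}"
proof -
  have "{u. mc u} \<subseteq> {xs. set xs \<subseteq> P \<and> length xs \<le> rk y - rk x + 1}"
    using mc_length scc_set unfolding mc_def by fastforce
  then show ?thesis using finite_lists_length_le[OF fin] finite_subset by blast
qed

definition mu :: "'a list \<Rightarrow> nat" where
  "mu u = card {d. mc d \<and> lexgt (L d) (L u)}"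

lemma fs_mu: assumes "fs u v" shows "mu v < mu u"
proof -
  have g: "lexgt (L v) (L u)" using fs_lexgt[OF assms] .
  have "{d. mc d \<and> lexgt (L d) (L v)} \<subset> {d. mc d \<and> lexgt (L d) (L u)}"
  proof
    show "{d. mc d \<and> lexgt (L d) (L v)} \<subseteq> {d. mc d \<and> lexgt (L d) (L u)}"
      using g lexgt_trans by blast
    have "v \<in> {d. mc d \<and> lexgt (L d) (L u)}" using g fs_mc[OF assms] by simp
    moreover have "v \<notin> {d. mc d \<and> lexgt (L d) (L v)}" using lexgt_irrefl by blast
    ultimately show "{d. mc d \<and> lexgt (L d) (L v)} \<noteq> {d. mc d \<and> lexgt (L d) (L u)}" by blast
  qed
  moreover have "finite {d. mc d \<and> lexgt (L d) (L u)}"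
    using finite_mc by (rule finite_subset[rotated]) auto
  ultimately show ?thesis unfolding mu_def by (rule psubset_card_mono[rotated])
qed

lemma nth_upd2: "k < length l \<Longrightarrow> l[p := x, q := y] ! k = (if k = q then y else if k = p then x else l ! k)"
  by (simp add: nth_list_update)

definition normal :: "'a list \<Rightarrow> bool" where
  "normal u \<longleftrightarrow> (\<forall>v. \<not> fs u v)"

lemma normal_iff: assumes "mc u" shows "normal u \<longleftrightarrow> ascent_free (L u)"
proof
  assume n: "normal u"
  show "ascent_free (L u)" unfolding ascent_free_def
  proof (intro allI impI notI)
    fix k assume k: "Suc k < length (L u)" "L u ! k < L u ! Suc k"
    have "asc u (Suc k)" using k asc_L by simp
    then have "fs u (U (Suc k) u)" using fs_props(1)[OF assms] by blast
    then show False using n by (simp add: normal_def)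
  qed
next
  assume a: "ascent_free (L u)"
  show "normal u" unfolding normal_def
  proof (intro allI notI)
    fix v assume "fs u v"
    then obtain i where i: "asc u i" by (auto simp: fs_def)
    then have "0 < i" "Suc i < length u" "L u ! (i - 1) < L u ! i" using asc_L by auto
    moreover have "Suc (i - 1) = i" using \<open>0 < i\<close> by simp
    moreover have "Suc (i - 1) < length (L u)" using \<open>Suc i < length u\<close> \<open>0 < i\<close> by simp
    ultimately show False using a[unfolded ascent_free_def, rule_format, of "i - 1"] by simp
  qed
qed

lemma nf_exists: "mc u \<Longrightarrow> \<exists>n. fs\<^sup>*\<^sup>* u n \<and> normal n"
proof (induction u rule: measure_induct_rule[of mu])
  case (less u)
  show ?case
  proof (cases "normal u")
    case True then show ?thesis by blast
  next
    case False
    then obtain v where v: "fs u v" by (auto simp: normal_def)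
    then obtain n where "fs\<^sup>*\<^sup>* v n" "normal n" using less fs_mu fs_mc by blast
    then show ?thesis using v by (meson converse_rtranclp_into_rtranclp)
  qed
qed

lemma nf_normal: "fs\<^sup>*\<^sup>* u n \<Longrightarrow> normal u \<Longrightarrow> n = u"
  by (induction rule: converse_rtranclp_induct) (auto simp: normal_def)

lemma fs_rt_mc: "fs\<^sup>*\<^sup>* u v \<Longrightarrow> mc u \<Longrightarrow> mc v"
  by (induction rule: rtranclp_induct) (auto dest: fs_mc)

lemma local_conf_lt:
  assumes "mc u" "asc u i" "asc u j" "i < j"
  shows "\<exists>w. fs\<^sup>*\<^sup>* (U i u) w \<and> fs\<^sup>*\<^sup>* (U j u) w"
proof -
  have ai: "0 < i" "Suc i < length u" "L u ! (i - 1) < L u ! i" using assms(2) asc_L by auto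
  have aj: "0 < j" "Suc j < length u" "L u ! (j - 1) < L u ! j" using assms(3) asc_L by auto
  note Fi = fs_props[OF assms(1,2)] and Fj = fs_props[OF assms(1,3)]
  show ?thesis
  proof (cases "j = Suc i")
    case False
    then have ij: "Suc i < j" using assms(4) by simp
    define si where "si = switch_elem P le lab (u ! (i - 1)) (u ! i) (u ! Suc i)"
    define sj where "sj = switch_elem P le lab (u ! (j - 1)) (u ! j) (u ! Suc j)"
    have Ui: "U i u = u[i := si]" using assms(2) by (simp add: qexch_eq si_def)
    have Uj: "U j u = u[j := sj]" using assms(3) by (simp add: qexch_eq sj_def)
    have n1: "u[i := si] ! (j - 1) = u ! (j - 1)" "u[i := si] ! j = u ! j" "u[i := si] ! Suc j = u ! Suc j"
      using ij by auto
    have n2: "u[j := sj] ! (i - 1) = u ! (i - 1)" "u[j := sj] ! i = u ! i" "u[j := sj] ! Suc i = u ! Suc i"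
      using ij by auto
    have a1: "asc (U i u) j" using assms(3) Ui n1 unfolding ascent_at_def by simp
    have a2: "asc (U j u) i" using assms(2) Uj n2 unfolding ascent_at_def by simp
    have e1: "U j (U i u) = u[i := si, j := sj]" using a1 Ui n1 by (simp add: qexch_eq sj_def)
    have e2: "U i (U j u) = u[j := sj, i := si]" using a2 Uj n2 by (simp add: qexch_eq si_def)
    have "u[i := si, j := sj] = u[j := sj, i := si]" using ij by (simp add: list_update_swap)
    then have "fs (U i u) ((U j u)[i := si]) \<and> fs (U j u) ((U j u)[i := si])"
      using fs_props(1)[OF Fi(2) a1] fs_props(1)[OF Fj(2) a2] e1 e2 Uj by simp
    then show ?thesis by blast
  next
    case True
    define a where "a = L u ! (i - 1)"
    define b where "b = L u ! i"
    define c where "c = L u ! Suc i"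
    have ab: "a < b" using ai a_def b_def by simp
    have bc: "b < c" using aj True b_def c_def by simp
    have ac: "a < c" using ab bc by (rule order.strict_trans)
    have len: "Suc (Suc i) < length u" using aj True by simp
    have i1: "i - 1 < i" "Suc (i - 1) = i" using ai by auto
    have B: "U i (U (Suc i) (U i u)) = U (Suc i) (U i (U (Suc i) u))"
    proof -
      have "0 < i" "i + 2 < length u" "L u ! (i - 1) < L u ! i" "L u ! i < L u ! (i + 1)"
        using ai len ab bc a_def b_def c_def by auto
      moreover have "maxchain P le x y u" using assms(1) sat_chain_scc unfolding mc_def maxchain_def by metis
      ultimately show ?thesis using brd[unfolded braid_relation_def, rule_format, of x y u i] by simp
    qed
    have lL: "length (L u) = length u - 1" by simp
    have idx: "i - 1 < length (L u)" "i < length (L u)" "Suc i < length (L u)" "i - 1 \<noteq> i" "Suc i \<noteq> i" "Suc i \<noteq> i - 1"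
      using len ai by auto
    define v1 where "v1 = U i u"
    have Lv1: "L v1 = (L u)[i - 1 := b, i := a]" using Fi(3) a_def b_def v1_def by simp
    have lv1: "length v1 = length u" using Fi(4) v1_def by simp
    have mv1: "mc v1" using Fi(2) v1_def by simp
    have v1n: "L v1 ! (i - 1) = b" "L v1 ! i = a" "L v1 ! Suc i = c"
      unfolding Lv1 using idx c_def by (simp_all add: nth_upd2)
    have av1: "asc v1 (Suc i)" unfolding asc_L using v1n lv1 len ac by simp
    note F1 = fs_props[OF mv1 av1]
    define v3 where "v3 = U (Suc i) v1"
    have lv3: "length v3 = length u" using F1(4) lv1 v3_def by simp
    have v3n: "L v3 ! (i - 1) = b" "L v3 ! i = c"
      unfolding v3_def F1(3) using idx v1n lv1 by (simp_all add: nth_upd2)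
    have av3: "asc v3 i" unfolding asc_L using v3n lv3 len ai bc by simp
    have p1: "fs\<^sup>*\<^sup>* v1 (U i v3)"
      using F1(1) fs_props(1)[OF F1(2) av3[unfolded v3_def]] v3_def by (meson r_into_rtranclp rtranclp.rtrancl_into_rtrancl)
    define v2 where "v2 = U (Suc i) u"
    have Lv2: "L v2 = (L u)[i := c, Suc i := b]" using Fj(3) True b_def c_def v2_def by simp
    have lv2: "length v2 = length u" using Fj(4) True v2_def by simp
    have mv2: "mc v2" using Fj(2) True v2_def by simp
    have v2n: "L v2 ! (i - 1) = a" "L v2 ! i = c" "L v2 ! Suc i = b"
      unfolding Lv2 using idx a_def by (simp_all add: nth_upd2)
    have av2: "asc v2 i" unfolding asc_L using v2n lv2 len ai ac by simp
    note F2 = fs_props[OF mv2 av2]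
    define v4 where "v4 = U i v2"
    have lv4: "length v4 = length u" using F2(4) lv2 v4_def by simp
    have v4n: "L v4 ! i = a" "L v4 ! Suc i = b"
      unfolding v4_def F2(3) using idx v2n lv2 by (simp_all add: nth_upd2)
    have av4: "asc v4 (Suc i)" unfolding asc_L using v4n lv4 len ab by simp
    have p2: "fs\<^sup>*\<^sup>* v2 (U (Suc i) v4)"
      using F2(1) fs_props(1)[OF F2(2) av4[unfolded v4_def]] v4_def by (meson r_into_rtranclp rtranclp.rtrancl_into_rtrancl)
    have "U i v3 = U (Suc i) v4" using B v1_def v2_def v3_def v4_def by simp
    then show ?thesis using p1 p2 v1_def v2_def True by metis
  qed
qed

lemma local_conf:
  assumes "fs u v1" "fs u v2"
  shows "\<exists>w. fs\<^sup>*\<^sup>* v1 w \<and> fs\<^sup>*\<^sup>* v2 w"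
proof -
  obtain i where i: "mc u" "asc u i" "v1 = U i u" using assms(1) by (auto simp: fs_def)
  obtain j where j: "asc u j" "v2 = U j u" using assms(2) by (auto simp: fs_def)
  consider "i = j" | "i < j" | "j < i" by linarith
  then show ?thesis
  proof cases
    case 1 then show ?thesis using i j by blast
  next
    case 2 then show ?thesis using local_conf_lt[OF i(1,2) j(1)] i j by simp
  next
    case 3 then show ?thesis using local_conf_lt[OF i(1) j(1) i(2)] i j by blast
  qed
qed

lemma nf_unique: "mc u \<Longrightarrow> fs\<^sup>*\<^sup>* u n1 \<Longrightarrow> normal n1 \<Longrightarrow> fs\<^sup>*\<^sup>* u n2 \<Longrightarrow> normal n2 \<Longrightarrow> n1 = n2"
proof (induction u arbitrary: n1 n2 rule: measure_induct_rule[of mu])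
  case (less u)
  show ?case
  proof (cases "normal u")
    case True
    then show ?thesis using less nf_normal by metis
  next
    case False
    have "u \<noteq> n1" using False less.prems(3) by auto
    then obtain v1 where v1: "fs u v1" "fs\<^sup>*\<^sup>* v1 n1"
      using less.prems(2) by (metis converse_rtranclpE)
    have "u \<noteq> n2" using False less.prems(5) by auto
    then obtain v2 where v2: "fs u v2" "fs\<^sup>*\<^sup>* v2 n2"
      using less.prems(4) by (metis converse_rtranclpE)
    obtain w where w: "fs\<^sup>*\<^sup>* v1 w" "fs\<^sup>*\<^sup>* v2 w" using local_conf[OF v1(1) v2(1)] by blast
    have mv1: "mc v1" and mv2: "mc v2" using fs_mc v1(1) v2(1) by auto
    have "mc w" using fs_rt_mc[OF w(1) mv1] .
    then obtain n where n: "fs\<^sup>*\<^sup>* w n" "normal n" using nf_exists by blast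
    have "n1 = n" using less.IH[OF fs_mu[OF v1(1)] mv1 v1(2) less.prems(3)] w(1) n
      by (meson rtranclp_trans)
    moreover have "n2 = n" using less.IH[OF fs_mu[OF v2(1)] mv2 v2(2) less.prems(5)] w(2) n
      by (meson rtranclp_trans)
    ultimately show ?thesis by simp
  qed
qed


lemma maxchain_mc: "maxchain P le x y u \<longleftrightarrow> mc u"
  unfolding maxchain_def mc_def sat_chain_scc by simp

lemma qstep_fs: assumes "qstep P le lab x y u v" shows "fs u v \<or> fs v u \<or> u = v"
proof -
  have m: "mc u" "mc v" using assms maxchain_mc by (auto simp: qstep_def)
  obtain i where "U i u = v \<or> U i v = u" using assms by (auto simp: qstep_def)
  then show ?thesis
  proof
    assume h: "U i u = v"
    show ?thesis
    proof (cases "asc u i")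
      case True then show ?thesis using h m fs_def by auto
    next
      case False then show ?thesis using h by (simp add: qexch_eq)
    qed
  next
    assume h: "U i v = u"
    show ?thesis
    proof (cases "asc v i")
      case True then show ?thesis using h m fs_def by auto
    next
      case False then show ?thesis using h by (simp add: qexch_eq)
    qed
  qed
qed

lemma fs_qstep: assumes "fs u v" shows "qstep P le lab x y u v"
proof -
  have "mc u" "mc v" using fs_mc[OF assms] by auto
  moreover obtain i where "v = U i u" using assms by (auto simp: fs_def)
  ultimately show ?thesis unfolding qstep_def maxchain_mc by blast
qed

lemma fs_rt_lequiv: assumes "fs\<^sup>*\<^sup>* u n" "mc u" shows "lequiv P le lab x y u n"
proof -
  have "(qstep P le lab x y)\<^sup>*\<^sup>* u n" using assms(1)
    by (induction rule: rtranclp_induct) (auto intro: rtranclp.rtrancl_into_rtrancl fs_qstep)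
  then show ?thesis using assms fs_rt_mc unfolding lequiv_def maxchain_mc by blast
qed

lemma CR:
  assumes "lequiv P le lab x y e d" "normal e" "normal d"
  shows "e = d"
proof -
  have me: "mc e" using assms(1) maxchain_mc by (simp add: lequiv_def)
  have "(qstep P le lab x y)\<^sup>*\<^sup>* e d" using assms(1) by (simp add: lequiv_def)
  then have "fs\<^sup>*\<^sup>* d e"
  proof (induction rule: rtranclp_induct)
    case base then show ?case by simp
  next
    case (step u v)
    have mu': "mc u" "mc v" using step(2) maxchain_mc by (auto simp: qstep_def)
    consider "fs u v" | "fs v u" | "u = v" using qstep_fs[OF step(2)] by blast
    then show ?case
    proof cases
      case 1
      obtain n where n: "fs\<^sup>*\<^sup>* v n" "normal n" using nf_exists[OF mu'(2)] by blast
      have "fs\<^sup>*\<^sup>* u n" using 1 n(1) by (meson converse_rtranclp_into_rtranclp)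
      then have "n = e" using nf_unique[OF mu'(1) _ n(2) step(3) assms(2)] by simp
      then show ?thesis using n by simp
    next
      case 2 then show ?thesis using step(3) by (meson converse_rtranclp_into_rtranclp)
    next
      case 3 then show ?thesis using step(3) by simp
    qed
  qed
  then show ?thesis using nf_normal assms(3) by metis
qed

end

context ctx begin

lemma hd_mid: "u \<noteq> [] \<Longrightarrow> v \<noteq> [] \<Longrightarrow> hd u = hd v \<Longrightarrow> hd (p @ u @ s) = hd (p @ v @ s)"
  by (cases p) auto

lemma last_mid: "u \<noteq> [] \<Longrightarrow> v \<noteq> [] \<Longrightarrow> last u = last v \<Longrightarrow> last (p @ u @ s) = last (p @ v @ s)"
  by (cases s) auto

lemma qstep_lift:
  assumes "qstep P le lab x y u v" "sc (p @ u @ s)"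
  shows "(qstep P le lab (hd (p @ u @ s)) (last (p @ u @ s)))\<^sup>*\<^sup>* (p @ u @ s) (p @ v @ s)"
    "sc (p @ v @ s)" "hd (p @ v @ s) = hd (p @ u @ s)" "last (p @ v @ s) = last (p @ u @ s)"
proof -
  have mu: "sc u" "hd u = x" "last u = y" and mv: "sc v" "hd v = x" "last v = y"
    using assms(1) sat_chain_scc unfolding qstep_def maxchain_def by metis+
  have ne: "u \<noteq> []" "v \<noteq> []" using mu(1) mv(1) scc_ne by metis+
  show sv: "sc (p @ v @ s)" using scc_replace[OF assms(2) ne(1) mv(1)] mu mv by simp
  show hv: "hd (p @ v @ s) = hd (p @ u @ s)" using hd_mid[OF ne(2) ne(1)] mu mv by simp
  show lv: "last (p @ v @ s) = last (p @ u @ s)" using last_mid[OF ne(2) ne(1)] mu mv by simp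
  let ?X = "hd (p @ u @ s)" and ?Y = "last (p @ u @ s)"
  have M: "maxchain P le ?X ?Y (p @ u @ s)" "maxchain P le ?X ?Y (p @ v @ s)"
    using assms(2) sv hv lv sat_chain_scc unfolding maxchain_def by metis+
  obtain i where "U i u = v \<or> U i v = u" using assms(1) by (auto simp: qstep_def)
  then show "(qstep P le lab ?X ?Y)\<^sup>*\<^sup>* (p @ u @ s) (p @ v @ s)"
  proof
    assume h: "U i u = v"
    show ?thesis
    proof (cases "asc u i")
      case True
      then have "U (i + length p) (p @ u @ s) = p @ v @ s" using qexch_lift h by metis
      then have "qstep P le lab ?X ?Y (p @ u @ s) (p @ v @ s)" using M unfolding qstep_def by blast
      then show ?thesis by blast
    next
      case False then show ?thesis using h by (simp add: qexch_eq)
    qed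
  next
    assume h: "U i v = u"
    show ?thesis
    proof (cases "asc v i")
      case True
      then have "U (i + length p) (p @ v @ s) = p @ u @ s" using qexch_lift h by metis
      then have "qstep P le lab ?X ?Y (p @ u @ s) (p @ v @ s)" using M unfolding qstep_def by blast
      then show ?thesis by blast
    next
      case False then show ?thesis using h by (simp add: qexch_eq)
    qed
  qed
qed

lemma lequiv_lift:
  assumes "lequiv P le lab x y e d" "sc (p @ e @ s)"
  shows "lequiv P le lab (hd (p @ e @ s)) (last (p @ e @ s)) (p @ e @ s) (p @ d @ s)"
proof -
  let ?X = "hd (p @ e @ s)" and ?Y = "last (p @ e @ s)"
  have "(qstep P le lab x y)\<^sup>*\<^sup>* e d" using assms(1) by (simp add: lequiv_def)
  then have "(qstep P le lab ?X ?Y)\<^sup>*\<^sup>* (p @ e @ s) (p @ d @ s) \<and> sc (p @ d @ s) \<and>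
     hd (p @ d @ s) = ?X \<and> last (p @ d @ s) = ?Y"
  proof (induction rule: rtranclp_induct)
    case base then show ?case using assms(2) by simp
  next
    case (step u v)
    note Q = qstep_lift[OF step(2), of p s]
    show ?case using step(3) Q by (metis rtranclp_trans)
  qed
  moreover have "maxchain P le ?X ?Y (p @ e @ s)" using assms(2) sat_chain_scc unfolding maxchain_def by metis
  ultimately show ?thesis unfolding lequiv_def maxchain_def sat_chain_scc by simp
qed


abbreviation "Cz \<equiv> chains_from P le z"
abbreviation "cls \<equiv> chain_class P le lab z"
abbreviation "QC \<equiv> Q_carrier P le lab z"
abbreviation "Qle \<equiv> Q_le P le lab z"
abbreviation "leqv \<equiv> lequiv P le lab"

lemma Cz_iff: "c \<in> Cz \<longleftrightarrow> sc c \<and> hd c = z"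
  by (simp add: chains_from_def sat_chain_scc)

lemma maxchain_sc: "maxchain P le a b u \<longleftrightarrow> sc u \<and> hd u = a \<and> last u = b"
  by (simp add: maxchain_def sat_chain_scc)

lemma lequiv_refl: "sc c \<Longrightarrow> leqv (hd c) (last c) c c"
  by (simp add: lequiv_def maxchain_sc)

lemma qstep_sym: "qstep P le lab a b u v \<Longrightarrow> qstep P le lab a b v u"
  unfolding qstep_def by blast

lemma lequiv_sym: assumes "leqv a b c d" shows "leqv a b d c"
proof -
  have "(qstep P le lab a b)\<^sup>*\<^sup>* c d" using assms by (simp add: lequiv_def)
  then have "(qstep P le lab a b)\<^sup>*\<^sup>* d c"
    by (induction rule: rtranclp_induct) (auto intro: converse_rtranclp_into_rtranclp qstep_sym)
  then show ?thesis using assms by (simp add: lequiv_def)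
qed

lemma lequiv_trans: "leqv a b c d \<Longrightarrow> leqv a b d e \<Longrightarrow> leqv a b c e"
  unfolding lequiv_def by (meson rtranclp_trans)

lemma cls_iff: "d \<in> cls c \<longleftrightarrow> d \<in> Cz \<and> last d = last c \<and> leqv z (last c) c d"
  by (simp add: chain_class_def)

lemma cls_refl: "c \<in> Cz \<Longrightarrow> c \<in> cls c"
  using lequiv_refl by (auto simp: cls_iff Cz_iff)

lemma cls_Cz: "d \<in> cls c \<Longrightarrow> c \<in> Cz"
  by (auto simp: cls_iff Cz_iff lequiv_def maxchain_sc)

lemma cls_sym: "d \<in> cls c \<Longrightarrow> c \<in> cls d"
  using lequiv_sym cls_Cz by (auto simp: cls_iff)

lemma cls_trans: "d \<in> cls c \<Longrightarrow> e \<in> cls d \<Longrightarrow> e \<in> cls c"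
  using lequiv_trans by (auto simp: cls_iff)

lemma cls_eq: assumes "d \<in> cls c" shows "cls d = cls c"
  using assms cls_sym cls_trans by blast

lemma QC_cls: "X \<in> QC \<Longrightarrow> d \<in> X \<Longrightarrow> X = cls d"
  unfolding Q_carrier_def using cls_eq by blast

lemma QC_Cz: "X \<in> QC \<Longrightarrow> d \<in> X \<Longrightarrow> d \<in> Cz"
  unfolding Q_carrier_def by (auto simp: cls_iff)

lemma QC_ne: "X \<in> QC \<Longrightarrow> \<exists>c. c \<in> X"
  unfolding Q_carrier_def using cls_refl by blast

lemma cls_QC: "c \<in> Cz \<Longrightarrow> cls c \<in> QC"
  unfolding Q_carrier_def by blast

lemma Cz_len: "c \<in> Cz \<Longrightarrow> rk (last c) = length c - 1"
  using rk_last rk0 by (simp add: Cz_iff)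

lemma cls_len: assumes "d \<in> cls c" shows "length d = length c"
proof -
  have "c \<in> Cz" "d \<in> Cz" "last d = last c" using assms cls_Cz by (auto simp: cls_iff)
  then have "length d - 1 = length c - 1" using Cz_len by metis
  moreover have "c \<noteq> []" "d \<noteq> []" using \<open>c \<in> Cz\<close> \<open>d \<in> Cz\<close> scc_ne by (auto simp: Cz_iff)
  ultimately show ?thesis by (cases c; cases d) auto
qed

lemma Cz_ne: "c \<in> Cz \<Longrightarrow> c \<noteq> []"
  using scc_ne by (auto simp: Cz_iff)

lemma Cz_prefix: "c @ f \<in> Cz \<Longrightarrow> c \<noteq> [] \<Longrightarrow> c \<in> Cz"
  using scc_prefix by (auto simp: Cz_iff)

lemma cls_ext: assumes "d \<in> cls c" "c @ f \<in> Cz" shows "d @ f \<in> cls (c @ f)"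
proof -
  have l: "leqv z (last c) c d" "last d = last c" using assms(1) by (auto simp: cls_iff)
  have s: "sc ([] @ c @ f)" using assms(2) by (simp add: Cz_iff)
  have cne: "c \<noteq> []" using assms(1) cls_Cz Cz_ne by blast
  have h: "hd (c @ f) = z" using assms(2) by (simp add: Cz_iff)
  have "leqv z (last (c @ f)) (c @ f) (d @ f)" using lequiv_lift[OF l(1) s] h by simp
  then show ?thesis using h unfolding cls_iff lequiv_def maxchain_sc Cz_iff by simp
qed

lemma prefix_of_set:
  assumes "c \<in> Cz" "d \<in> Cz" "set c \<subseteq> set d"
  shows "\<exists>f. d = c @ f"
proof -
  have rc: "\<And>j. j < length c \<Longrightarrow> rk (c ! j) = j" using assms(1) rk_nth rk0 by (simp add: Cz_iff)
  have rd: "\<And>j. j < length d \<Longrightarrow> rk (d ! j) = j" using assms(2) rk_nth rk0 by (simp add: Cz_iff)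
  have key: "\<And>j. j < length c \<Longrightarrow> j < length d \<and> d ! j = c ! j"
  proof -
    fix j assume j: "j < length c"
    then have "c ! j \<in> set d" using assms(3) by auto
    then obtain k where k: "k < length d" "d ! k = c ! j" by (auto simp: in_set_conv_nth)
    then have "k = j" using rc[OF j] rd[OF k(1)] by simp
    then show "j < length d \<and> d ! j = c ! j" using k by simp
  qed
  have cne: "c \<noteq> []" using assms(1) Cz_ne by blast
  have "length c - 1 < length d" using key[of "length c - 1"] cne by simp
  then have len: "length c \<le> length d" by linarith
  have "take (length c) d = c"
    using key len by (intro nth_equalityI) auto
  then have "d = c @ drop (length c) d" by (metis append_take_drop_id)
  then show ?thesis by blast
qed

lemma Qle_iff: "Qle X Y \<longleftrightarrow> X \<in> QC \<and> Y \<in> QC \<and> (\<forall>c\<in>X. \<exists>f. c @ f \<in> Y)"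
proof -
  define B where "B = (\<lambda>X Y. X \<in> QC \<and> Y \<in> QC \<and> (\<exists>c\<in>X. \<exists>d\<in>Y. set c \<subseteq> set d))"
  define R where "R = (\<lambda>X Y. X \<in> QC \<and> Y \<in> QC \<and> (\<forall>c\<in>X. \<exists>f. c @ f \<in> Y))"
  have QB: "Qle = B\<^sup>+\<^sup>+" unfolding Q_le_def B_def by simp
  have BR: "B X Y \<Longrightarrow> R X Y" for X Y
  proof -
    assume "B X Y"
    then obtain c d where cd: "X \<in> QC" "Y \<in> QC" "c \<in> X" "d \<in> Y" "set c \<subseteq> set d" by (auto simp: B_def)
    have Cc: "c \<in> Cz" "d \<in> Cz" using cd QC_Cz by auto
    obtain f where f: "d = c @ f" using prefix_of_set[OF Cc cd(5)] by blast
    have "\<exists>f. c' @ f \<in> Y" if "c' \<in> X" for c'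
    proof -
      have "c' \<in> cls c" using QC_cls[OF cd(1) cd(3)] that by simp
      then have "c' @ f \<in> cls (c @ f)" using cls_ext Cc f by simp
      then show ?thesis using QC_cls[OF cd(2) cd(4)] f by blast
    qed
    then show "R X Y" using cd by (auto simp: R_def)
  qed
  have RB: "R X Y \<Longrightarrow> B X Y" for X Y
  proof -
    assume r: "R X Y"
    then obtain c where "c \<in> X" using QC_ne by (auto simp: R_def)
    then obtain f where "c @ f \<in> Y" using r by (auto simp: R_def)
    moreover have "set c \<subseteq> set (c @ f)" by auto
    ultimately show "B X Y" using r \<open>c \<in> X\<close> unfolding B_def R_def by blast
  qed
  have Rt: "R X Y \<Longrightarrow> R Y W \<Longrightarrow> R X W" for X Y W
    unfolding R_def by (metis append.assoc)
  have "B\<^sup>+\<^sup>+ X Y \<Longrightarrow> R X Y"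
    by (induction rule: tranclp_induct) (auto intro: BR Rt)
  moreover have "R X Y \<Longrightarrow> B\<^sup>+\<^sup>+ X Y" using RB by blast
  ultimately show ?thesis unfolding QB R_def by blast
qed

lemma Qpc:
  assumes "c \<in> Cz" "W \<in> QC"
  shows "pcover QC Qle (cls c) W \<longleftrightarrow> (\<exists>a. c @ [a] \<in> W)"
proof
  assume a: "\<exists>a. c @ [a] \<in> W"
  then obtain a where ca: "c @ [a] \<in> W" by blast
  have W: "W = cls (c @ [a])" using QC_cls[OF assms(2) ca] .
  have ca': "c @ [a] \<in> Cz" using QC_Cz[OF assms(2) ca] .
  have X: "cls c \<in> QC" using cls_QC[OF assms(1)] .
  have le1: "Qle (cls c) W"
    unfolding Qle_iff using X assms(2) cls_ext[OF _ ca'] W by blast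
  have ne: "cls c \<noteq> W"
  proof
    assume "cls c = W"
    then have "c @ [a] \<in> cls c" using ca by simp
    then show False using cls_len by fastforce
  qed
  have noV: "\<not> (\<exists>V\<in>QC. Qle (cls c) V \<and> Qle V W \<and> V \<noteq> cls c \<and> V \<noteq> W)"
  proof
    assume "\<exists>V\<in>QC. Qle (cls c) V \<and> Qle V W \<and> V \<noteq> cls c \<and> V \<noteq> W"
    then obtain V where V: "V \<in> QC" "Qle (cls c) V" "Qle V W" "V \<noteq> cls c" "V \<noteq> W" by blast
    obtain f where f: "c @ f \<in> V" using V(2) cls_refl[OF assms(1)] unfolding Qle_iff by blast
    obtain g where g: "c @ f @ g \<in> W" using V(3) f unfolding Qle_iff by (metis append.assoc)
    have "length (c @ f @ g) = length (c @ [a])" using g W cls_len by blast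
    then have "length f + length g = 1" by simp
    then consider "f = []" | "g = []" by (cases f) auto
    then show False
    proof cases
      case 1 then show False using QC_cls[OF V(1) f] V(4) by simp
    next
      case 2
      then have "V = cls (c @ f)" "W = cls (c @ f)" using QC_cls[OF V(1) f] QC_cls[OF assms(2) g] by auto
      then show False using V(5) by simp
    qed
  qed
  show "pcover QC Qle (cls c) W" unfolding pcover_def using X assms(2) le1 ne noV by blast
next
  assume pc: "pcover QC Qle (cls c) W"
  then have le1: "Qle (cls c) W" and ne: "cls c \<noteq> W"
    and noV: "\<not> (\<exists>V\<in>QC. Qle (cls c) V \<and> Qle V W \<and> V \<noteq> cls c \<and> V \<noteq> W)"
    by (auto simp: pcover_def)
  obtain f where f: "c @ f \<in> W" using le1 cls_refl[OF assms(1)] unfolding Qle_iff by blast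
  have "f \<noteq> []" using f ne QC_cls[OF assms(2) f] by auto
  then obtain a f' where af: "f = a # f'" by (cases f) auto
  have cfz: "c @ f \<in> Cz" using QC_Cz[OF assms(2) f] .
  have caz: "c @ [a] \<in> Cz" using Cz_prefix[of "c @ [a]" f'] cfz af by simp
  define V where "V = cls (c @ [a])"
  have VQ: "V \<in> QC" using cls_QC[OF caz] V_def by simp
  have l1: "Qle (cls c) V" unfolding Qle_iff V_def using cls_QC[OF assms(1)] cls_QC[OF caz] cls_ext[OF _ caz] by blast
  have l2: "Qle V W" unfolding Qle_iff V_def
  proof (intro conjI ballI)
    fix d assume "d \<in> cls (c @ [a])"
    then have "d @ f' \<in> cls (c @ [a] @ f')" using cls_ext[of d "c @ [a]" f'] cfz af by simp
    then show "\<exists>g. d @ g \<in> W" using QC_cls[OF assms(2) f] af by auto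
  qed (use cls_QC[OF caz] assms(2) in auto)
  have "V \<noteq> cls c"
  proof
    assume "V = cls c"
    then have "c @ [a] \<in> cls c" using cls_refl[OF caz] V_def by simp
    then show False using cls_len by fastforce
  qed
  then have "V = W" using noV VQ l1 l2 by blast
  then show "\<exists>a. c @ [a] \<in> W" using cls_refl[OF caz] V_def by blast
qed


lemma reach_z: "reach z"
  unfolding reach_def using zP by (intro exI[of _ "[z]"]) simp

lemma qstep_mset: assumes "qstep P le lab z b u v" shows "mset (L u) = mset (L v)"
proof -
  have su: "sc u" "hd u = z" using assms by (auto simp: qstep_def maxchain_sc)
  have r: "reach (hd u)" using su reach_z by simp
  have sv: "sc v" "hd v = z" using assms by (auto simp: qstep_def maxchain_sc)
  have rv: "reach (hd v)" using sv reach_z by simp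
  have sw: "mset (L (U i w)) = mset (L w)" if "sc w" "reach (hd w)" for w i
  proof (cases "asc w i")
    case True
    note Q = qexch_step[OF that True]
    have "i - 1 < length (L w)" "i < length (L w)" using True by (auto simp: ascent_at_def)
    then show ?thesis using Q(5) mset_swap by metis
  next
    case False then show ?thesis by (simp add: qexch_eq)
  qed
  obtain i where "U i u = v \<or> U i v = u" using assms by (auto simp: qstep_def)
  then show ?thesis using sw[OF su(1) r, of i] sw[OF sv(1) rv, of i] by auto
qed

lemma lequiv_mset: assumes "leqv z b c d" shows "mset (L c) = mset (L d)"
proof -
  have "(qstep P le lab z b)\<^sup>*\<^sup>* c d" using assms by (simp add: lequiv_def)
  then show ?thesis by (induction rule: rtranclp_induct) (auto dest: qstep_mset)
qed

lemma label_ms_cls: assumes "c \<in> Cz" shows "label_ms lab (cls c) = mset (L c)"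
proof -
  have "(SOME d. d \<in> cls c) \<in> cls c" using cls_refl[OF assms] by (rule someI)
  then have "mset (L c) = mset (L (SOME d. d \<in> cls c))" using lequiv_mset by (auto simp: cls_iff)
  then show ?thesis by (simp add: label_ms_def)
qed

lemma lstar_ext: assumes "c \<in> Cz" "c @ [a] \<in> Cz" shows "lstar lab (cls c) (cls (c @ [a])) = lab (last c) a"
proof -
  have cne: "c \<noteq> []" using assms(1) Cz_ne by blast
  have "label_ms lab (cls (c @ [a])) - label_ms lab (cls c) = {#lab (last c) a#}"
    using label_ms_cls[OF assms(1)] label_ms_cls[OF assms(2)] lw_append1[OF cne, of lab a] by simp
  then show ?thesis unfolding lstar_def by simp
qed

fun phi :: "'a list \<Rightarrow> 'a list \<Rightarrow> 'a list set list" where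
  "phi c [] = [cls c]"
| "phi c (a # f) = cls c # phi (c @ [a]) f"

lemma phi_hd: "hd (phi c f) = cls c" by (cases f) auto
lemma phi_ne: "phi c f \<noteq> []" by (cases f) auto
lemma phi_last: "last (phi c f) = cls (c @ f)"
  by (induction f arbitrary: c) (auto simp: phi_ne)
lemma phi_len: "length (phi c f) = Suc (length f)"
  by (induction f arbitrary: c) auto

lemma phi_chain: "c \<in> Cz \<Longrightarrow> c @ f \<in> Cz \<Longrightarrow> scc QC Qle (phi c f)"
proof (induction f arbitrary: c)
  case Nil then show ?case using cls_QC by simp
next
  case (Cons a f)
  have caz: "c @ [a] \<in> Cz" using Cz_prefix[of "c @ [a]" f] Cons.prems by simp
  have IH: "scc QC Qle (phi (c @ [a]) f)" using Cons.IH[OF caz] Cons.prems by simp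
  have "pcover QC Qle (cls c) (cls (c @ [a]))"
    using Qpc[OF Cons.prems(1) cls_QC[OF caz]] cls_refl[OF caz] by blast
  then show ?case using IH by (simp add: scc_Cons phi_ne phi_hd)
qed

lemma phi_lw: "c \<in> Cz \<Longrightarrow> c @ f \<in> Cz \<Longrightarrow> label_word (lstar lab) (phi c f) = L (last c # f)"
proof (induction f arbitrary: c)
  case Nil then show ?case by simp
next
  case (Cons a f)
  have caz: "c @ [a] \<in> Cz" using Cz_prefix[of "c @ [a]" f] Cons.prems by simp
  have IH: "label_word (lstar lab) (phi (c @ [a]) f) = L (a # f)" using Cons.IH[OF caz] Cons.prems by simp
  have "label_word (lstar lab) (phi c (a # f)) = lstar lab (cls c) (cls (c @ [a])) # label_word (lstar lab) (phi (c @ [a]) f)"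
    by (simp add: lw_Cons phi_ne phi_hd)
  also have "\<dots> = lab (last c) a # L (a # f)" using IH lstar_ext[OF Cons.prems(1) caz] by simp
  finally show ?case by simp
qed

lemma phi_inj: "c @ f \<in> Cz \<Longrightarrow> c @ g \<in> Cz \<Longrightarrow> phi c f = phi c g \<Longrightarrow> f = g"
proof (induction f arbitrary: c g)
  case Nil then show ?case using phi_len[of c g] by (cases g) auto
next
  case (Cons a f)
  show ?case
  proof (cases g)
    case Nil then show ?thesis using Cons.prems phi_len[of c "a # f"] by simp
  next
    case (Cons b g')
    have caz: "c @ [a] \<in> Cz" using Cz_prefix[of "c @ [a]" f] Cons.prems(1) by simp
    have cbz: "c @ [b] \<in> Cz" using Cz_prefix[of "c @ [b]" g'] Cons.prems(2) Cons by simp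
    have t: "phi (c @ [a]) f = phi (c @ [b]) g'" using Cons.prems(3) Cons by simp
    then have "cls (c @ [a]) = cls (c @ [b])" using phi_hd by metis
    then have "c @ [a] \<in> cls (c @ [b])" using cls_refl[OF caz] by simp
    then have ab: "a = b" by (simp add: cls_iff)
    then have "f = g'" using Cons.IH[of "c @ [a]" g'] Cons.prems Cons t by simp
    then show ?thesis using ab Cons by simp
  qed
qed

lemma phi_surj: "scc QC Qle Xs \<Longrightarrow> c \<in> Cz \<Longrightarrow> hd Xs = cls c \<Longrightarrow> \<exists>f. c @ f \<in> Cz \<and> Xs = phi c f"
proof (induction Xs arbitrary: c rule: induct_list012)
  case 1 then show ?case by simp
next
  case (2 X) then show ?case by (intro exI[of _ "[]"]) simp
next
  case (3 X W rest)
  have pc: "pcover QC Qle (cls c) W" and sW: "scc QC Qle (W # rest)" using 3 by auto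
  have WQ: "W \<in> QC" using pc by (simp add: pcover_def)
  obtain a where ca: "c @ [a] \<in> W" using Qpc[OF 3(4) WQ] pc by blast
  have caz: "c @ [a] \<in> Cz" using QC_Cz[OF WQ ca] .
  have "W = cls (c @ [a])" using QC_cls[OF WQ ca] .
  then obtain f' where f': "(c @ [a]) @ f' \<in> Cz" "W # rest = phi (c @ [a]) f'"
    using 3(2)[OF sW caz] by auto
  then show ?case using 3(5) by (intro exI[of _ "a # f'"]) simp
qed


lemma intv_at: "reach x \<Longrightarrow> intv P le z lab rk x"
  by (intro intv.intro intv_axioms.intro ctx_axioms)

lemma split_last: assumes "c \<in> Cz" shows "c @ f = butlast c @ (last c # f) @ []"
  using Cz_ne[OF assms] by simp

lemma key_exists:
  assumes "c \<in> Cz" "Y \<in> QC" "c @ f0 \<in> Y"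
  shows "\<exists>f. c @ f \<in> Y \<and> ascent_free (L (last c # f))"
proof -
  define x where "x = last c"
  define y where "y = last (c @ f0)"
  define p where "p = butlast c"
  have rx: "reach x" unfolding reach_def x_def using assms(1) by (auto simp: Cz_iff)
  interpret I: intv P le z lab rk x y using intv_at[OF rx] .
  have cf0: "c @ f0 \<in> Cz" using QC_Cz[OF assms(2,3)] .
  have dec: "c @ f0 = p @ (x # f0) @ []" using split_last[OF assms(1)] p_def x_def by simp
  have s0: "sc (p @ (x # f0) @ [])" using cf0 dec by (simp add: Cz_iff)
  have se0: "sc (x # f0)" using scc_suffix[of P le p "x # f0"] s0 by simp
  have le0: "last (x # f0) = y" using dec y_def by (simp add: last_append)
  have me0: "I.mc (x # f0)" using se0 le0 by (simp add: I.mc_def)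
  obtain n where n: "I.fs\<^sup>*\<^sup>* (x # f0) n" "I.normal n" using I.nf_exists[OF me0] by blast
  have mn: "I.mc n" using I.fs_rt_mc[OF n(1) me0] .
  then have nx: "n = x # tl n" using scc_ne unfolding I.mc_def by (metis list.collapse)
  have lq: "leqv x y (x # f0) n" using I.fs_rt_lequiv[OF n(1) me0] .
  have lq2: "leqv (hd (p @ (x # f0) @ [])) (last (p @ (x # f0) @ [])) (p @ (x # f0) @ []) (p @ n @ [])"
    using lequiv_lift[OF lq s0] .
  have pn: "p @ n @ [] = c @ tl n" using nx split_last[OF assms(1), of "tl n"] p_def x_def by simp
  have "leqv z (last (c @ f0)) (c @ f0) (c @ tl n)"
    using lq2 dec pn cf0 by (simp add: Cz_iff)
  then have "c @ tl n \<in> cls (c @ f0)" unfolding cls_iff lequiv_def maxchain_sc Cz_iff by simp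
  then have "c @ tl n \<in> Y" using QC_cls[OF assms(2,3)] by simp
  moreover have "ascent_free (L (x # tl n))" using I.normal_iff[OF mn] n(2) nx by simp
  ultimately show ?thesis using x_def by blast
qed

lemma key_unique:
  assumes "c \<in> Cz" "Y \<in> QC" "c @ f1 \<in> Y" "c @ f2 \<in> Y"
    "ascent_free (L (last c # f1))" "ascent_free (L (last c # f2))"
  shows "f1 = f2"
proof -
  define x where "x = last c"
  define y where "y = last (c @ f1)"
  define p where "p = butlast c"
  have rx: "reach x" unfolding reach_def x_def using assms(1) by (auto simp: Cz_iff)
  interpret I: intv P le z lab rk x y using intv_at[OF rx] .
  have c2: "c @ f2 \<in> cls (c @ f1)" using QC_cls[OF assms(2,3)] assms(4) by simp
  then have ly: "last (c @ f2) = y" and lqz: "leqv z y (c @ f1) (c @ f2)" using y_def by (auto simp: cls_iff)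
  have cf: "c @ f1 \<in> Cz" "c @ f2 \<in> Cz" using QC_Cz assms by auto
  have dec1: "c @ f1 = p @ (x # f1) @ []" using split_last[OF assms(1)] p_def x_def by simp
  have dec2: "c @ f2 = p @ (x # f2) @ []" using split_last[OF assms(1)] p_def x_def by simp
  have se1: "sc (x # f1)" using scc_suffix[of P le p "x # f1"] cf(1) dec1 by (simp add: Cz_iff)
  have se2: "sc (x # f2)" using scc_suffix[of P le p "x # f2"] cf(2) dec2 by (simp add: Cz_iff)
  have le1: "last (x # f1) = y" using dec1 y_def by (simp add: last_append)
  have le2: "last (x # f2) = y" using dec2 ly by (simp add: last_append)
  have m1: "I.mc (x # f1)" and m2: "I.mc (x # f2)" using se1 se2 le1 le2 by (auto simp: I.mc_def)
  have L: "leqv x y (x # f1) (x # f2)"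
  proof (cases "p = []")
    case True
    have "hd c = z" using assms(1) by (simp add: Cz_iff)
    then have "x = z" using True p_def x_def Cz_ne[OF assms(1)] by (cases c rule: rev_cases) auto
    then show ?thesis using True lqz dec1 dec2 by simp
  next
    case pne: False
    show ?thesis
    proof (cases "f1 = []")
      case True
      have "length (c @ f2) = length (c @ f1)" using cls_len[OF c2] .
      then have "f2 = []" using True by simp
      then show ?thesis using True lequiv_refl[OF se1] le1 by simp
    next
      case f1ne: False
      have xP: "x \<in> P" using scc_hd[OF se1] by simp
      have yP: "y \<in> P" using scc_set[OF se1] le1 by (metis last_in_set list.distinct(1) subsetD)
      have "length p \<ge> 1" using pne by (cases p) auto
      moreover have "length c = length p + 1" using p_def Cz_ne[OF assms(1)] by simp
      ultimately have lcz: "length c \<ge> 2" by simp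
      have "rk x = length c - 1" using Cz_len[OF assms(1)] x_def by simp
      then have zx: "z \<noteq> x" using lcz rk0 by auto
      have "rk y = rk x + length f1" using rk_last[OF se1] le1 by simp
      then have xy: "x \<noteq> y" using f1ne by auto
      have lxy: "le x y" using le_hd_last[OF se1] le1 by simp
      have mz: "maxchain P le z x c" using assms(1) x_def by (simp add: maxchain_sc Cz_iff)
      have mx1: "maxchain P le x y (x # f1)" and mx2: "maxchain P le x y (x # f2)"
        using se1 se2 le1 le2 by (auto simp: maxchain_sc)
      have "leqv z y (c @ tl (x # f1)) (c @ tl (x # f2))" using lqz by simp
      then show ?thesis
        using canc[unfolded cancellative_def, rule_format, of z x y c "x # f1" "x # f2"]
          zP xP yP zle[OF xP] zx lxy xy mz mx1 mx2 by blast
    qed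
  qed
  have n1: "I.normal (x # f1)" using I.normal_iff[OF m1] assms(5) x_def by simp
  have n2: "I.normal (x # f2)" using I.normal_iff[OF m2] assms(6) x_def by simp
  show ?thesis using I.CR[OF L n1 n2] by simp
qed

lemma main: "ERstar_labeling QC Qle (lstar lab)"
  unfolding ERstar_labeling_def
proof (intro ballI impI)
  fix X Y assume XQ: "X \<in> QC" and YQ: "Y \<in> QC" and XY: "Qle X Y"
  obtain c where cX: "c \<in> X" using QC_ne[OF XQ] by blast
  have cz: "c \<in> Cz" using QC_Cz[OF XQ cX] .
  have Xc: "X = cls c" using QC_cls[OF XQ cX] .
  obtain f0 where f0: "c @ f0 \<in> Y" using XY cX unfolding Qle_iff by blast
  have MC: "maxchain QC Qle X Y Xs \<longleftrightarrow> (\<exists>f. c @ f \<in> Y \<and> Xs = phi c f)" for Xs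
  proof
    assume m: "maxchain QC Qle X Y Xs"
    then have "scc QC Qle Xs" "hd Xs = cls c" "last Xs = Y"
      using Xc by (auto simp: maxchain_def sat_chain_scc)
    then obtain f where f: "c @ f \<in> Cz" "Xs = phi c f" using phi_surj[OF _ cz] by blast
    then have "Y = cls (c @ f)" using phi_last \<open>last Xs = Y\<close> by simp
    then have "c @ f \<in> Y" using cls_refl[OF f(1)] by simp
    then show "\<exists>f. c @ f \<in> Y \<and> Xs = phi c f" using f by blast
  next
    assume "\<exists>f. c @ f \<in> Y \<and> Xs = phi c f"
    then obtain f where f: "c @ f \<in> Y" "Xs = phi c f" by blast
    have fz: "c @ f \<in> Cz" using QC_Cz[OF YQ f(1)] .
    have "scc QC Qle Xs" using phi_chain[OF cz fz] f by simp
    moreover have "hd Xs = X" using f Xc phi_hd by simp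
    moreover have "last Xs = Y" using f phi_last QC_cls[OF YQ f(1)] by simp
    ultimately show "maxchain QC Qle X Y Xs" by (simp add: maxchain_def sat_chain_scc)
  qed
  have LW: "c @ f \<in> Y \<Longrightarrow> label_word (lstar lab) (phi c f) = L (last c # f)" for f
  proof -
    assume "c @ f \<in> Y"
    then have "c @ f \<in> Cz" using QC_Cz[OF YQ] by blast
    then show ?thesis using phi_lw[OF cz] by blast
  qed
  obtain f where f: "c @ f \<in> Y" "ascent_free (L (last c # f))"
    using key_exists[OF cz YQ f0] by blast
  show "\<exists>!Xs. maxchain QC Qle X Y Xs \<and> ascent_free (label_word (lstar lab) Xs)"
  proof (rule ex1I[of _ "phi c f"])
    show "maxchain QC Qle X Y (phi c f) \<and> ascent_free (label_word (lstar lab) (phi c f))"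
    proof
      show "maxchain QC Qle X Y (phi c f)" using MC f(1) by blast
      show "ascent_free (label_word (lstar lab) (phi c f))" using LW[OF f(1)] f(2) by simp
    qed
  next
    fix Xs assume h: "maxchain QC Qle X Y Xs \<and> ascent_free (label_word (lstar lab) Xs)"
    then obtain g where g: "c @ g \<in> Y" "Xs = phi c g" using MC by blast
    have "ascent_free (L (last c # g))" using h g(2) LW[OF g(1)] by simp
    then have "g = f" using key_unique[OF cz YQ g(1) f(1) _ f(2)] by simp
    then show "Xs = phi c f" using g by simp
  qed
qed

end

theorem proposition3p21:
  fixes P :: "'a set" and le :: "'a \<Rightarrow> 'a \<Rightarrow> bool" and z :: 'a
    and lab :: "'a \<Rightarrow> 'a \<Rightarrow> 'l::order"
  assumes "finite P"
    and "is_poset P le"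
    and "graded_with_bot P le z"
    and "ER_labeling P le lab"
    and "rank_two_switching P le z lab"
    and "braid_relation P le lab"
    and "cancellative P le lab"
  shows "ERstar_labeling (Q_carrier P le lab z) (Q_le P le lab z) (lstar lab)"
proof -
  obtain rk :: "'a \<Rightarrow> nat" where rk: "rk z = 0" "\<And>x y. pcover P le x y \<Longrightarrow> rk y = Suc (rk x)"
    and zP: "z \<in> P" and zle: "\<And>x. x \<in> P \<Longrightarrow> le z x"
    using assms(3) unfolding graded_with_bot_def by blast
  interpret C: ctx P le z lab rk
    by (unfold_locales) (use assms zP zle rk in auto)
  show ?thesis using C.main .
qed

end
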